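(* Let $(X,Y,R)$ be a random triple with $X\in\mathbb{R}^d$, $Y\in\{0,1\}$, $R\in\{0,1\}$, $P(Y=y,R=r)>0$ for all $y,r$, and with strictly positive conditional Lebesgue densities $p(x\mid Y=y,R=r)$. Suppose the exponential tilt model with $T(x)=x$ holds: there exist $\alpha_0^\star,\alpha_1^\star\in\mathbb{R}$, $\beta_0^\star,\beta_1^\star\in\mathbb{R}^d$ such that for all $x,y$, $$p(x\mid Y=y,R=0)P(Y=y\mid R=0)=\exp(\alpha_y^\star+{\beta_y^\star}^\top x)\,p(x\mid Y=y,R=1)P(Y=y\mid R=1).$$ Let $B=(\beta_0^\star,\beta_1^\star)\in\mathbb{R}^{d\times 2}$, $U=B^\top X$, and $V=(\mathbf{I}-\mathbf{P}_B)X$, where $\mathbf{P}_B$ is the orthogonal projection onto the column space of $B$. Then $V\perp R\mid (Y,U)$, and hence $X\perp R\mid (Y,U)$.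
   Context: $\perp$ denotes conditional independence. *)

theory Defs
  imports "HOL-Probability.Probability"
begin

definition orth_proj :: "'v::euclidean_space set \<Rightarrow> 'v \<Rightarrow> 'v" where
  "orth_proj S x = (THE p. p \<in> S \<and> (\<forall>v\<in>S. (x - p) \<bullet> v = 0))"

definition cond_indep ::
  "'a measure \<Rightarrow> ('a \<Rightarrow> 'b) \<Rightarrow> 'b measure \<Rightarrow> ('a \<Rightarrow> 'c) \<Rightarrow> 'c measure
     \<Rightarrow> ('a \<Rightarrow> 'e) \<Rightarrow> 'e measure \<Rightarrow> bool" where
  "cond_indep M V MV R MR Z MZ \<longleftrightarrow>
     (\<forall>A\<in>sets MV. \<forall>B\<in>sets MR.
        AE \<omega> in M.
          real_cond_exp M (vimage_algebra (space M) Z MZ)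
              (\<lambda>\<omega>. indicator A (V \<omega>) * indicator B (R \<omega>)) \<omega>
          = real_cond_exp M (vimage_algebra (space M) Z MZ) (\<lambda>\<omega>. indicator A (V \<omega>)) \<omega>
            * real_cond_exp M (vimage_algebra (space M) Z MZ) (\<lambda>\<omega>. indicator B (R \<omega>)) \<omega>)"

end

theory Submission
  imports Defs
begin


lemma orth_proj_uniq_aux:
  fixes S :: "'v::euclidean_space set"
  assumes "subspace S" "p \<in> S" "\<forall>v\<in>S. (x - p) \<bullet> v = 0" "q \<in> S" "\<forall>v\<in>S. (x - q) \<bullet> v = 0"
  shows "p = q"
proof -
  have d: "p - q \<in> S" using assms by (simp add: subspace_diff)
  have "(x - q) \<bullet> (p - q) - (x - p) \<bullet> (p - q) = 0" using assms d by simp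
  then have "(p - q) \<bullet> (p - q) = 0" by (simp add: inner_diff_left)
  then show ?thesis by simp
qed

lemma orth_proj_unique:
  fixes S :: "'v::euclidean_space set"
  assumes "subspace S" "p \<in> S" "\<forall>v\<in>S. (x - p) \<bullet> v = 0"
  shows "orth_proj S x = p"
  unfolding orth_proj_def
  using assms orth_proj_uniq_aux[OF assms(1)] by (intro the_equality) blast+

lemma orth_proj_props:
  fixes S :: "'v::euclidean_space set"
  assumes "subspace S"
  shows "orth_proj S x \<in> S \<and> (\<forall>v\<in>S. (x - orth_proj S x) \<bullet> v = 0)"
proof -
  obtain y z where y: "y \<in> span S" and z: "\<And>w. w \<in> span S \<Longrightarrow> orthogonal z w" and xyz: "x = y + z"
    using orthogonal_subspace_decomp_exists by blast
  have sp: "span S = S" using assms by (simp add: span_eq_iff)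
  have "orth_proj S x = y"
    using y z xyz sp by (intro orth_proj_unique assms) (auto simp: orthogonal_def)
  then show ?thesis using y z xyz sp by (auto simp: orthogonal_def)
qed

lemma orth_proj_linear:
  fixes S :: "'v::euclidean_space set"
  assumes "subspace S"
  shows "linear (orth_proj S)"
proof (rule linearI)
  fix x y
  show "orth_proj S (x + y) = orth_proj S x + orth_proj S y"
    using orth_proj_props[OF assms, of x] orth_proj_props[OF assms, of y]
    by (intro orth_proj_unique assms) (auto simp: subspace_add[OF assms] algebra_simps inner_diff_left inner_add_left)
next
  fix c :: real and x
  have "(c *\<^sub>R x - c *\<^sub>R orth_proj S x) = c *\<^sub>R (x - orth_proj S x)" by (simp add: algebra_simps)
  then show "orth_proj S (c *\<^sub>R x) = c *\<^sub>R orth_proj S x"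
    using orth_proj_props[OF assms, of x]
    by (intro orth_proj_unique assms) (auto simp: subspace_scale[OF assms])
qed

lemma orth_proj_meas:
  fixes S :: "'v::euclidean_space set"
  assumes "subspace S"
  shows "(\<lambda>x. x - orth_proj S x) \<in> borel_measurable borel"
proof -
  have "continuous_on UNIV (orth_proj S)"
    using orth_proj_linear[OF assms] by (intro linear_continuous_on) (simp add: linear_conv_bounded_linear)
  then have "orth_proj S \<in> borel_measurable borel" by (rule borel_measurable_continuous_onI)
  then show ?thesis by measurable
qed



theorem lemma6:
  fixes M :: "'a measure"
    and X :: "'a \<Rightarrow> real ^ 'd"
    and Y R :: "'a \<Rightarrow> nat"
    and p :: "nat \<Rightarrow> nat \<Rightarrow> real ^ 'd \<Rightarrow> real"
    and \<alpha> :: "nat \<Rightarrow> real"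
    and \<beta> :: "nat \<Rightarrow> real ^ 'd"
  assumes prob: "prob_space M"
    and X_meas: "X \<in> M \<rightarrow>\<^sub>M borel"
    and Y_meas: "Y \<in> M \<rightarrow>\<^sub>M count_space UNIV"
    and R_meas: "R \<in> M \<rightarrow>\<^sub>M count_space UNIV"
    and Y_vals: "\<forall>\<omega>\<in>space M. Y \<omega> \<in> {0, 1}"
    and R_vals: "\<forall>\<omega>\<in>space M. R \<omega> \<in> {0, 1}"
    and pos_cells: "\<forall>y\<in>{0,1}. \<forall>r\<in>{0,1}.
          measure M {\<omega>\<in>space M. Y \<omega> = y \<and> R \<omega> = r} > 0"
    and p_meas: "\<forall>y\<in>{0,1}. \<forall>r\<in>{0,1}. p y r \<in> borel_measurable lborel"
    and p_pos: "\<forall>y\<in>{0,1}. \<forall>r\<in>{0,1}. \<forall>x. p y r x > 0"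
    and p_density: "\<forall>y\<in>{0,1}. \<forall>r\<in>{0,1}. \<forall>A\<in>sets borel.
          emeasure M {\<omega>\<in>space M. X \<omega> \<in> A \<and> Y \<omega> = y \<and> R \<omega> = r}
          = emeasure M {\<omega>\<in>space M. Y \<omega> = y \<and> R \<omega> = r}
            * (\<integral>\<^sup>+ x\<in>A. ennreal (p y r x) \<partial>lborel)"
    and tilt: "\<forall>x. \<forall>y\<in>{0,1}.
          p y 0 x * (measure M {\<omega>\<in>space M. Y \<omega> = y \<and> R \<omega> = 0}
                      / measure M {\<omega>\<in>space M. R \<omega> = 0})
          = exp (\<alpha> y + \<beta> y \<bullet> x) * p y 1 x
            * (measure M {\<omega>\<in>space M. Y \<omega> = y \<and> R \<omega> = 1}
               / measure M {\<omega>\<in>space M. R \<omega> = 1})"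
  defines "U \<equiv> (\<lambda>\<omega>. (\<beta> 0 \<bullet> X \<omega>, \<beta> 1 \<bullet> X \<omega>))"
    and "V \<equiv> (\<lambda>\<omega>. X \<omega> - orth_proj (span {\<beta> 0, \<beta> 1}) (X \<omega>))"
  shows "cond_indep M V borel R (count_space UNIV)
           (\<lambda>\<omega>. (Y \<omega>, U \<omega>)) (count_space UNIV \<Otimes>\<^sub>M borel)
       \<and> cond_indep M X borel R (count_space UNIV)
           (\<lambda>\<omega>. (Y \<omega>, U \<omega>)) (count_space UNIV \<Otimes>\<^sub>M borel)"
proof -
  interpret P: prob_space M by (rule prob)
  note [measurable] = X_meas Y_meas R_meas
  define E where "E y r = {\<omega>\<in>space M. Y \<omega> = y \<and> R \<omega> = r}" for y r
  have E_sets[measurable]: "E y r \<in> sets M" for y r unfolding E_def by measurable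
  define m where "m y r = measure M (E y r)" for y r
  define q where "q r = measure M {\<omega>\<in>space M. R \<omega> = r}" for r
  have m_pos: "m y r > 0" if "y\<in>{0,1}" "r\<in>{0,1}" for y r
    using pos_cells that unfolding m_def E_def by blast
  have q_pos: "q r > 0" if "r\<in>{0,1}" for r
  proof -
    have "m 0 r \<le> q r" unfolding m_def q_def E_def
      by (rule P.finite_measure_mono) (auto, measurable)
    then show ?thesis using m_pos[of 0 r] that by simp
  qed
  define c where "c = q 0 / q 1"
  have c_pos: "c > 0" unfolding c_def using q_pos by simp
  define Hx where "Hx y x = 1 / (1 + c * exp (\<alpha> y + \<beta> y \<bullet> x))" for y x
  have Hx_meas[measurable]: "Hx y \<in> borel_measurable borel" for y
    unfolding Hx_def by measurable
  have Hx_bnd: "0 \<le> Hx y x \<and> Hx y x \<le> 1" for y x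
  proof -
    have "1 \<le> 1 + c * exp (\<alpha> y + \<beta> y \<bullet> x)" using c_pos by (simp add: less_imp_le)
    then show ?thesis unfolding Hx_def by simp
  qed
  define W where "W \<omega> = (if R \<omega> = 1 then 1 else 0 :: real)" for \<omega>
  have W_meas[measurable]: "W \<in> borel_measurable M" unfolding W_def by measurable
  have tilt': "m y 0 * p y 0 x = c * exp (\<alpha> y + \<beta> y \<bullet> x) * (m y 1 * p y 1 x)"
    if "y \<in> {0,1}" for y x
  proof -
    have "p y 0 x * (m y 0 / q 0) = exp (\<alpha> y + \<beta> y \<bullet> x) * p y 1 x * (m y 1 / q 1)"
      using tilt that unfolding m_def q_def E_def by blast
    then show ?thesis using q_pos[of 0] q_pos[of 1] unfolding c_def by (simp add: field_simps)
  qed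
  have pw: "m y 0 * p y 0 x * (g * Hx y x) + m y 1 * p y 1 x * (g * Hx y x) = m y 1 * p y 1 x * g"
    if "y \<in> {0,1}" for y x g
  proof -
    have pos: "1 + c * exp (\<alpha> y + \<beta> y \<bullet> x) > 0" using c_pos by (simp add: add_pos_pos)
    have "m y 0 * p y 0 x * (g * Hx y x) + m y 1 * p y 1 x * (g * Hx y x)
        = (c * exp (\<alpha> y + \<beta> y \<bullet> x) + 1) * (m y 1 * p y 1 x) * g * Hx y x"
      using tilt'[OF that] by (simp add: algebra_simps)
    also have "\<dots> = m y 1 * p y 1 x * g" unfolding Hx_def using pos by (simp add: field_simps)
    finally show ?thesis .
  qed
  have D: "(\<integral>\<^sup>+\<omega>. ennreal (f (X \<omega>) * indicator (E y r) \<omega>) \<partial>M)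
        = (\<integral>\<^sup>+x. ennreal (m y r * p y r x * f x) \<partial>lborel)"
    if yr: "y\<in>{0,1}" "r\<in>{0,1}" and f[measurable]: "f \<in> borel_measurable borel" and fnn: "\<And>x. 0 \<le> f x"
    for y r and f :: "real^'d \<Rightarrow> real"
  proof -
    have "p y r \<in> borel_measurable lborel" using p_meas yr by blast
    then have pm[measurable]: "p y r \<in> borel_measurable borel" by simp
    have ppos: "0 \<le> p y r x" for x using p_pos yr by (meson less_imp_le)
    have mnn: "0 \<le> m y r" using m_pos[OF yr] by simp
    define N where "N = density M (indicator (E y r))"
    have Xl[measurable]: "X \<in> M \<rightarrow>\<^sub>M lborel" using X_meas by simp
    have distrN: "distr N lborel X = density lborel (\<lambda>x. ennreal (m y r * p y r x))"
    proof (rule measure_eqI)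
      show "sets (distr N lborel X) = sets (density lborel (\<lambda>x. ennreal (m y r * p y r x)))" by simp
      fix A assume "A \<in> sets (distr N lborel X)"
      then have A[measurable]: "A \<in> sets borel" by simp
      have "emeasure (distr N lborel X) A = emeasure N (X -` A \<inter> space N)"
        by (rule emeasure_distr) (auto simp: N_def)
      also have "\<dots> = (\<integral>\<^sup>+\<omega>. indicator (E y r) \<omega> * indicator (X -` A \<inter> space M) \<omega> \<partial>M)"
        unfolding N_def by (subst emeasure_density) auto
      also have "\<dots> = (\<integral>\<^sup>+\<omega>. indicator {\<omega>\<in>space M. X \<omega> \<in> A \<and> Y \<omega> = y \<and> R \<omega> = r} \<omega> \<partial>M)"
        by (rule nn_integral_cong) (auto simp: E_def indicator_def)
      also have "\<dots> = emeasure M {\<omega>\<in>space M. X \<omega> \<in> A \<and> Y \<omega> = y \<and> R \<omega> = r}"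
        by (rule nn_integral_indicator) measurable
      also have "\<dots> = emeasure M (E y r) * (\<integral>\<^sup>+ x\<in>A. ennreal (p y r x) \<partial>lborel)"
        using p_density yr A unfolding E_def by blast
      also have "\<dots> = (\<integral>\<^sup>+ x. ennreal (m y r) * (ennreal (p y r x) * indicator A x) \<partial>lborel)"
        unfolding m_def by (subst nn_integral_cmult) (auto simp: P.emeasure_eq_measure)
      also have "\<dots> = emeasure (density lborel (\<lambda>x. ennreal (m y r * p y r x))) A"
        by (subst emeasure_density) (auto intro!: nn_integral_cong simp: ennreal_mult mnn ppos mult.assoc)
      finally show "emeasure (distr N lborel X) A = emeasure (density lborel (\<lambda>x. ennreal (m y r * p y r x))) A" .
    qed
    have "(\<integral>\<^sup>+\<omega>. ennreal (f (X \<omega>) * indicator (E y r) \<omega>) \<partial>M)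
        = (\<integral>\<^sup>+\<omega>. indicator (E y r) \<omega> * ennreal (f (X \<omega>)) \<partial>M)"
      by (rule nn_integral_cong) (auto simp: indicator_def)
    also have "\<dots> = (\<integral>\<^sup>+\<omega>. ennreal (f (X \<omega>)) \<partial>N)"
      unfolding N_def by (subst nn_integral_density) auto
    also have "\<dots> = (\<integral>\<^sup>+x. ennreal (f x) \<partial>distr N lborel X)"
      by (subst nn_integral_distr) (auto simp: N_def)
    also have "\<dots> = (\<integral>\<^sup>+x. ennreal (m y r * p y r x) * ennreal (f x) \<partial>lborel)"
      unfolding distrN by (subst nn_integral_density) auto
    also have "\<dots> = (\<integral>\<^sup>+x. ennreal (m y r * p y r x * f x) \<partial>lborel)"
      by (rule nn_integral_cong) (simp add: ennreal_mult' mnn ppos fnn)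
    finally show ?thesis .
  qed
  have add4: "(\<integral>\<^sup>+\<omega>. (a \<omega> + b \<omega>) + (c \<omega> + d \<omega>) \<partial>M) = ((\<integral>\<^sup>+\<omega>. a \<omega> \<partial>M) + (\<integral>\<^sup>+\<omega>. b \<omega> \<partial>M)) + ((\<integral>\<^sup>+\<omega>. c \<omega> \<partial>M) + (\<integral>\<^sup>+\<omega>. d \<omega> \<partial>M))"
    if "a \<in> borel_measurable M" "b \<in> borel_measurable M" "c \<in> borel_measurable M" "d \<in> borel_measurable M"
    for a b c d :: "'a \<Rightarrow> ennreal"
    using that by (simp add: nn_integral_add)
  have KN: "(\<integral>\<^sup>+\<omega>. ennreal (g (Y \<omega>, X \<omega>) * W \<omega>) \<partial>M)
          = (\<integral>\<^sup>+\<omega>. ennreal (g (Y \<omega>, X \<omega>) * Hx (Y \<omega>) (X \<omega>)) \<partial>M)"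
    if g[measurable]: "g \<in> borel_measurable (count_space UNIV \<Otimes>\<^sub>M borel)" and gnn: "\<And>z. 0 \<le> g z"
    for g :: "nat \<times> (real^'d) \<Rightarrow> real"
  proof -
    have gy[measurable]: "(\<lambda>x. g (y, x)) \<in> borel_measurable borel" for y by measurable
    have gH: "0 \<le> g (y, x) * Hx y x" for y x using gnn Hx_bnd by simp
    have "(\<integral>\<^sup>+\<omega>. ennreal (g (Y \<omega>, X \<omega>) * W \<omega>) \<partial>M)
        = (\<integral>\<^sup>+\<omega>. ennreal (g (0, X \<omega>) * indicator (E 0 1) \<omega>) + ennreal (g (1, X \<omega>) * indicator (E 1 1) \<omega>) \<partial>M)"
    proof (rule nn_integral_cong)
      fix \<omega> assume "\<omega> \<in> space M"
      then have "Y \<omega> \<in> {0,1}" "R \<omega> \<in> {0,1}" using Y_vals R_vals by auto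
      with \<open>\<omega> \<in> space M\<close> show "ennreal (g (Y \<omega>, X \<omega>) * W \<omega>) = ennreal (g (0, X \<omega>) * indicator (E 0 1) \<omega>) + ennreal (g (1, X \<omega>) * indicator (E 1 1) \<omega>)"
        by (auto simp: W_def E_def indicator_def)
    qed
    also have "\<dots> = (\<integral>\<^sup>+\<omega>. ennreal (g (0, X \<omega>) * indicator (E 0 1) \<omega>) \<partial>M) + (\<integral>\<^sup>+\<omega>. ennreal (g (1, X \<omega>) * indicator (E 1 1) \<omega>) \<partial>M)"
      by (rule nn_integral_add) auto
    also have "\<dots> = (\<integral>\<^sup>+x. ennreal (m 0 1 * p 0 1 x * g (0, x)) \<partial>lborel) + (\<integral>\<^sup>+x. ennreal (m 1 1 * p 1 1 x * g (1, x)) \<partial>lborel)"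
      using D[of 0 1 "\<lambda>x. g (0, x)"] D[of 1 1 "\<lambda>x. g (1, x)"] gnn by simp
    finally have L: "(\<integral>\<^sup>+\<omega>. ennreal (g (Y \<omega>, X \<omega>) * W \<omega>) \<partial>M) = \<dots>" .
    have T: "(\<integral>\<^sup>+x. ennreal (m y 0 * p y 0 x * (g (y, x) * Hx y x)) \<partial>lborel) + (\<integral>\<^sup>+x. ennreal (m y 1 * p y 1 x * (g (y, x) * Hx y x)) \<partial>lborel)
        = (\<integral>\<^sup>+x. ennreal (m y 1 * p y 1 x * g (y, x)) \<partial>lborel)" if y: "y \<in> {0,1}" for y
    proof -
      have "p y r \<in> borel_measurable lborel" if "r \<in> {0,1}" for r using p_meas y that by blast
      then have [measurable]: "p y 0 \<in> borel_measurable borel" "p y 1 \<in> borel_measurable borel" "p y (Suc 0) \<in> borel_measurable borel" by auto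
      have nn: "0 \<le> m y r * p y r x * (g (y, x) * Hx y x)" if "r \<in> {0,1}" for r x
        using m_pos[OF y that] p_pos y that gH[of y x] by (meson less_imp_le mult_nonneg_nonneg)
      have "(\<integral>\<^sup>+x. ennreal (m y 0 * p y 0 x * (g (y, x) * Hx y x)) \<partial>lborel) + (\<integral>\<^sup>+x. ennreal (m y 1 * p y 1 x * (g (y, x) * Hx y x)) \<partial>lborel)
          = (\<integral>\<^sup>+x. ennreal (m y 0 * p y 0 x * (g (y, x) * Hx y x)) + ennreal (m y 1 * p y 1 x * (g (y, x) * Hx y x)) \<partial>lborel)"
        by (rule nn_integral_add[symmetric]) measurable
      also have "\<dots> = (\<integral>\<^sup>+x. ennreal (m y 1 * p y 1 x * g (y, x)) \<partial>lborel)"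
      proof (rule nn_integral_cong)
        fix x
        have "ennreal (m y 0 * p y 0 x * (g (y, x) * Hx y x)) + ennreal (m y 1 * p y 1 x * (g (y, x) * Hx y x))
            = ennreal (m y 0 * p y 0 x * (g (y, x) * Hx y x) + m y 1 * p y 1 x * (g (y, x) * Hx y x))"
          by (rule ennreal_plus[symmetric]) (rule nn, simp)+
        then show "ennreal (m y 0 * p y 0 x * (g (y, x) * Hx y x)) + ennreal (m y 1 * p y 1 x * (g (y, x) * Hx y x))
            = ennreal (m y 1 * p y 1 x * g (y, x))" by (simp only: pw[OF y])
      qed
      finally show ?thesis .
    qed
    have "(\<integral>\<^sup>+\<omega>. ennreal (g (Y \<omega>, X \<omega>) * Hx (Y \<omega>) (X \<omega>)) \<partial>M)
        = (\<integral>\<^sup>+\<omega>. (ennreal (g (0, X \<omega>) * Hx 0 (X \<omega>) * indicator (E 0 0) \<omega>) + ennreal (g (0, X \<omega>) * Hx 0 (X \<omega>) * indicator (E 0 1) \<omega>))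
                 + (ennreal (g (1, X \<omega>) * Hx 1 (X \<omega>) * indicator (E 1 0) \<omega>) + ennreal (g (1, X \<omega>) * Hx 1 (X \<omega>) * indicator (E 1 1) \<omega>)) \<partial>M)"
    proof (rule nn_integral_cong)
      fix \<omega> assume "\<omega> \<in> space M"
      then have "Y \<omega> \<in> {0,1}" "R \<omega> \<in> {0,1}" using Y_vals R_vals by auto
      with \<open>\<omega> \<in> space M\<close> show "ennreal (g (Y \<omega>, X \<omega>) * Hx (Y \<omega>) (X \<omega>)) = (ennreal (g (0, X \<omega>) * Hx 0 (X \<omega>) * indicator (E 0 0) \<omega>) + ennreal (g (0, X \<omega>) * Hx 0 (X \<omega>) * indicator (E 0 1) \<omega>))
                 + (ennreal (g (1, X \<omega>) * Hx 1 (X \<omega>) * indicator (E 1 0) \<omega>) + ennreal (g (1, X \<omega>) * Hx 1 (X \<omega>) * indicator (E 1 1) \<omega>))"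
        by (auto simp: E_def indicator_def)
    qed
    also have "\<dots> = ((\<integral>\<^sup>+\<omega>. ennreal (g (0, X \<omega>) * Hx 0 (X \<omega>) * indicator (E 0 0) \<omega>) \<partial>M) + (\<integral>\<^sup>+\<omega>. ennreal (g (0, X \<omega>) * Hx 0 (X \<omega>) * indicator (E 0 1) \<omega>) \<partial>M))
         + ((\<integral>\<^sup>+\<omega>. ennreal (g (1, X \<omega>) * Hx 1 (X \<omega>) * indicator (E 1 0) \<omega>) \<partial>M) + (\<integral>\<^sup>+\<omega>. ennreal (g (1, X \<omega>) * Hx 1 (X \<omega>) * indicator (E 1 1) \<omega>) \<partial>M))"
      by (rule add4) measurable
    also have "\<dots> = ((\<integral>\<^sup>+x. ennreal (m 0 0 * p 0 0 x * (g (0, x) * Hx 0 x)) \<partial>lborel) + (\<integral>\<^sup>+x. ennreal (m 0 1 * p 0 1 x * (g (0, x) * Hx 0 x)) \<partial>lborel))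
         + ((\<integral>\<^sup>+x. ennreal (m 1 0 * p 1 0 x * (g (1, x) * Hx 1 x)) \<partial>lborel) + (\<integral>\<^sup>+x. ennreal (m 1 1 * p 1 1 x * (g (1, x) * Hx 1 x)) \<partial>lborel))"
      using D[of 0 0 "\<lambda>x. g (0, x) * Hx 0 x"] D[of 0 1 "\<lambda>x. g (0, x) * Hx 0 x"]
        D[of 1 0 "\<lambda>x. g (1, x) * Hx 1 x"] D[of 1 1 "\<lambda>x. g (1, x) * Hx 1 x"] gH by simp
    also have "\<dots> = (\<integral>\<^sup>+x. ennreal (m 0 1 * p 0 1 x * g (0, x)) \<partial>lborel) + (\<integral>\<^sup>+x. ennreal (m 1 1 * p 1 1 x * g (1, x)) \<partial>lborel)"
      using T[of 0] T[of 1] by simp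
    finally show ?thesis using L by simp
  qed
  have KL: "(\<integral>\<omega>. g (Y \<omega>, X \<omega>) * W \<omega> \<partial>M) = (\<integral>\<omega>. g (Y \<omega>, X \<omega>) * Hx (Y \<omega>) (X \<omega>) \<partial>M)"
    if g[measurable]: "g \<in> borel_measurable (count_space UNIV \<Otimes>\<^sub>M borel)" and gb: "\<And>z. 0 \<le> g z \<and> g z \<le> 1"
    for g :: "nat \<times> (real^'d) \<Rightarrow> real"
  proof -
    have Hm[measurable]: "(\<lambda>\<omega>. Hx (Y \<omega>) (X \<omega>)) \<in> borel_measurable M"
      unfolding Hx_def by measurable
    have i1: "integrable M (\<lambda>\<omega>. g (Y \<omega>, X \<omega>) * W \<omega>)"
      proof (rule P.integrable_const_bound[where B=1])
      show "AE \<omega> in M. norm (g (Y \<omega>, X \<omega>) * W \<omega>) \<le> 1"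
        using gb by (auto simp: W_def)
    qed measurable
    have i2: "integrable M (\<lambda>\<omega>. g (Y \<omega>, X \<omega>) * Hx (Y \<omega>) (X \<omega>))"
      proof (rule P.integrable_const_bound[where B=1])
      show "AE \<omega> in M. norm (g (Y \<omega>, X \<omega>) * Hx (Y \<omega>) (X \<omega>)) \<le> 1"
        using gb Hx_bnd by (auto simp: abs_mult intro!: mult_le_one)
    qed measurable
    have n1: "0 \<le> g (Y \<omega>, X \<omega>) * W \<omega>" for \<omega> using gb by (simp add: W_def)
    have n2: "0 \<le> g (Y \<omega>, X \<omega>) * Hx (Y \<omega>) (X \<omega>)" for \<omega> using gb Hx_bnd by simp
    have "ennreal (\<integral>\<omega>. g (Y \<omega>, X \<omega>) * W \<omega> \<partial>M) = ennreal (\<integral>\<omega>. g (Y \<omega>, X \<omega>) * Hx (Y \<omega>) (X \<omega>) \<partial>M)"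
      using KN[OF g] gb nn_integral_eq_integral[OF i1] nn_integral_eq_integral[OF i2] n1 n2 by simp
    moreover have "0 \<le> (\<integral>\<omega>. g (Y \<omega>, X \<omega>) * W \<omega> \<partial>M)" by (intro integral_nonneg_AE AE_I2) (simp add: n1)
    moreover have "0 \<le> (\<integral>\<omega>. g (Y \<omega>, X \<omega>) * Hx (Y \<omega>) (X \<omega>) \<partial>M)" by (intro integral_nonneg_AE AE_I2) (simp add: n2)
    ultimately show ?thesis by simp
  qed
  note U_def = assms(12) and V_def = assms(13)
  have YU_meas[measurable]: "(\<lambda>\<omega>. (Y \<omega>, U \<omega>)) \<in> M \<rightarrow>\<^sub>M count_space UNIV \<Otimes>\<^sub>M borel"
    unfolding U_def by measurable
  define G where "G = vimage_algebra (space M) (\<lambda>\<omega>. (Y \<omega>, U \<omega>)) (count_space UNIV \<Otimes>\<^sub>M borel)"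
  have subalg: "subalgebra M G"
    unfolding subalgebra_def G_def using sets_image_in_sets[OF refl YU_meas] by simp
  have fm: "finite_measure M" using prob by (simp add: prob_space_def)
  interpret S: sigma_finite_subalgebra M G
    by (rule finite_measure_subalgebra_is_sigma_finite)
       (rule finite_measure_subalgebra.intro[OF fm finite_measure_subalgebra_axioms.intro[OF subalg]])
  have Gsets: "\<exists>C\<in>sets (count_space UNIV \<Otimes>\<^sub>M borel). S = (\<lambda>\<omega>. (Y \<omega>, U \<omega>)) -` C \<inter> space M"
    if "S \<in> sets G" for S
    using that unfolding G_def by (subst (asm) sets_vimage_algebra2) (auto simp: space_pair_measure)
  define Hg where "Hg z = 1 / (1 + c * exp (\<alpha> (fst z) + (if fst z = 0 then fst (snd z) else snd (snd z))))"
    for z :: "nat \<times> real \<times> real"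
  have Hg_meas[measurable]: "Hg \<in> borel_measurable (count_space UNIV \<Otimes>\<^sub>M borel)"
  proof -
    have [measurable]: "(\<lambda>z::real\<times>real. snd z) \<in> borel_measurable borel" "(\<lambda>z::real\<times>real. fst z) \<in> borel_measurable borel"
      by (rule borel_measurable_continuous_onI; intro continuous_intros)+
    have fm: "(\<lambda>z::nat\<times>(real\<times>real). fst z) \<in> count_space UNIV \<Otimes>\<^sub>M borel \<rightarrow>\<^sub>M count_space UNIV" by measurable
    have [measurable]: "Measurable.pred (count_space UNIV \<Otimes>\<^sub>M borel) (\<lambda>z::nat\<times>(real\<times>real). fst z = 0)"
      using measurable_compose[OF fm, of "\<lambda>n. n = 0" "count_space UNIV"] by simp
    have [measurable]: "(\<lambda>z::nat\<times>(real\<times>real). \<alpha> (fst z)) \<in> borel_measurable (count_space UNIV \<Otimes>\<^sub>M borel)"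
      using measurable_compose[OF fm, of \<alpha> borel] by simp
    show ?thesis unfolding Hg_def by measurable
  qed
  define h where "h \<omega> = Hg (Y \<omega>, U \<omega>)" for \<omega>
  have h_G[measurable]: "h \<in> borel_measurable G"
  proof -
    have "(\<lambda>\<omega>. (Y \<omega>, U \<omega>)) \<in> G \<rightarrow>\<^sub>M count_space UNIV \<Otimes>\<^sub>M borel"
      unfolding G_def by (rule measurable_vimage_algebra1) (simp add: space_pair_measure)
    then show ?thesis unfolding h_def by measurable
  qed
  have h_M[measurable]: "h \<in> borel_measurable M" by (rule measurable_from_subalg[OF subalg h_G])
  have h_eq: "h \<omega> = Hx (Y \<omega>) (X \<omega>)" if "\<omega> \<in> space M" for \<omega>
  proof -
    have "Y \<omega> \<in> {0,1}" using Y_vals that by auto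
    then show ?thesis unfolding h_def Hg_def Hx_def U_def by auto
  qed
  have aux01: "0 \<le> 1 / (1 + c * exp t) \<and> 1 / (1 + c * exp t) \<le> 1" for t
  proof -
    have "1 \<le> 1 + c * exp t" using c_pos by (simp add: less_imp_le)
    then show ?thesis by simp
  qed
  have h_bnd: "0 \<le> h \<omega> \<and> h \<omega> \<le> 1" for \<omega>
    unfolding h_def Hg_def by (rule aux01)
  have setint: "(\<integral>\<omega>\<in>T. k \<omega> \<partial>M) = (\<integral>\<omega>. indicator T \<omega> * k \<omega> \<partial>M)" for T and k :: "'a \<Rightarrow> real"
    by (simp add: set_lebesgue_integral_def)
  have bnd_int: "integrable M k" if "k \<in> borel_measurable M" "\<And>\<omega>. \<omega> \<in> space M \<Longrightarrow> \<bar>k \<omega>\<bar> \<le> B"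
    for k :: "'a \<Rightarrow> real" and B :: real
    by (rule P.integrable_const_bound[where B=B]) (use that in auto)
  have intW: "integrable M W" by (rule bnd_int[of _ 1]) (auto simp: W_def)
  have inth: "integrable M h" by (rule bnd_int[of _ 1]) (use h_bnd in auto)
  have cW: "AE \<omega> in M. real_cond_exp M G W \<omega> = h \<omega>"
  proof (rule S.real_cond_exp_charact)
    fix T assume "T \<in> sets G"
    then obtain C where C[measurable]: "C \<in> sets (count_space UNIV \<Otimes>\<^sub>M borel)"
      and T: "T = (\<lambda>\<omega>. (Y \<omega>, U \<omega>)) -` C \<inter> space M" using Gsets by blast
    define g where "g z = (indicator C (fst z, (\<beta> 0 \<bullet> snd z, \<beta> 1 \<bullet> snd z)) :: real)" for z :: "nat \<times> (real^'d)"
    have g_meas[measurable]: "g \<in> borel_measurable (count_space UNIV \<Otimes>\<^sub>M borel)" unfolding g_def by measurable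
    have gT: "indicator T \<omega> = g (Y \<omega>, X \<omega>)" if "\<omega> \<in> space M" for \<omega>
      using that unfolding T g_def U_def by (simp add: indicator_def)
    have "(\<integral>\<omega>\<in>T. W \<omega> \<partial>M) = (\<integral>\<omega>. g (Y \<omega>, X \<omega>) * W \<omega> \<partial>M)"
      unfolding setint by (rule Bochner_Integration.integral_cong) (simp_all add: gT)
    also have "\<dots> = (\<integral>\<omega>. g (Y \<omega>, X \<omega>) * Hx (Y \<omega>) (X \<omega>) \<partial>M)"
      by (rule KL[OF g_meas]) (simp add: g_def)
    also have "\<dots> = (\<integral>\<omega>\<in>T. h \<omega> \<partial>M)"
      unfolding setint by (rule Bochner_Integration.integral_cong) (simp_all add: gT h_eq)
    finally show "(\<integral>\<omega>\<in>T. W \<omega> \<partial>M) = (\<integral>\<omega>\<in>T. h \<omega> \<partial>M)" .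
  qed (simp_all add: intW inth)
  have main: "cond_indep M (\<lambda>\<omega>. \<phi> (X \<omega>)) borel R (count_space UNIV) (\<lambda>\<omega>. (Y \<omega>, U \<omega>)) (count_space UNIV \<Otimes>\<^sub>M borel)"
    if \<phi>m[measurable]: "\<phi> \<in> borel_measurable borel" for \<phi> :: "real^'d \<Rightarrow> real^'d"
    unfolding cond_indep_def G_def[symmetric]
  proof (intro ballI)
    fix A :: "(real^'d) set" and B :: "nat set"
    assume A[measurable]: "A \<in> sets borel" and B: "B \<in> sets (count_space UNIV)"
    define F where "F = (\<lambda>\<omega>. indicator A (\<phi> (X \<omega>)) :: real)"
    have F_meas[measurable]: "F \<in> borel_measurable M" unfolding F_def by measurable
    have F_bnd: "0 \<le> F \<omega> \<and> F \<omega> \<le> 1" for \<omega> unfolding F_def by (simp add: indicator_def)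
    have F_abs: "\<bar>F \<omega>\<bar> \<le> 1" for \<omega> using F_bnd[of \<omega>] by simp
    have h_abs: "\<bar>h \<omega>\<bar> \<le> 1" for \<omega> using h_bnd[of \<omega>] by simp
    have intF: "integrable M F" by (rule bnd_int[of _ 1]) (use F_bnd in auto)
    have intFW: "integrable M (\<lambda>\<omega>. F \<omega> * W \<omega>)" by (rule bnd_int[of _ 1]) (use F_bnd in \<open>auto simp: W_def\<close>)
    have inthF: "integrable M (\<lambda>\<omega>. h \<omega> * real_cond_exp M G F \<omega>)"
      by (rule S.real_cond_exp_intg(1)) (auto intro!: bnd_int[of _ 1] simp: abs_mult intro!: mult_le_one h_bnd F_bnd[THEN conjunct1] F_bnd[THEN conjunct2] h_abs F_abs)
    have cFW: "AE \<omega> in M. real_cond_exp M G (\<lambda>\<omega>. F \<omega> * W \<omega>) \<omega> = h \<omega> * real_cond_exp M G F \<omega>"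
    proof (rule S.real_cond_exp_charact)
      fix T assume TG: "T \<in> sets G"
      then obtain C where C[measurable]: "C \<in> sets (count_space UNIV \<Otimes>\<^sub>M borel)"
        and T: "T = (\<lambda>\<omega>. (Y \<omega>, U \<omega>)) -` C \<inter> space M" using Gsets by blast
      have TGm[measurable]: "indicator T \<in> borel_measurable G" using TG by measurable
      define g where "g z = (indicator C (fst z, (\<beta> 0 \<bullet> snd z, \<beta> 1 \<bullet> snd z)) * indicator A (\<phi> (snd z)) :: real)" for z :: "nat \<times> (real^'d)"
      have g_meas[measurable]: "g \<in> borel_measurable (count_space UNIV \<Otimes>\<^sub>M borel)" unfolding g_def by measurable
      have gT: "indicator T \<omega> * F \<omega> = g (Y \<omega>, X \<omega>)" if "\<omega> \<in> space M" for \<omega>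
        using that unfolding T g_def U_def F_def by (simp add: indicator_def)
      have "(\<integral>\<omega>\<in>T. F \<omega> * W \<omega> \<partial>M) = (\<integral>\<omega>. g (Y \<omega>, X \<omega>) * W \<omega> \<partial>M)"
        unfolding setint by (rule Bochner_Integration.integral_cong) (simp_all add: gT[symmetric])
      also have "\<dots> = (\<integral>\<omega>. g (Y \<omega>, X \<omega>) * Hx (Y \<omega>) (X \<omega>) \<partial>M)"
        by (rule KL[OF g_meas]) (simp add: g_def indicator_def)
      also have "\<dots> = (\<integral>\<omega>. (indicator T \<omega> * h \<omega>) * F \<omega> \<partial>M)"
        by (rule Bochner_Integration.integral_cong) (simp_all add: gT[symmetric] h_eq)
      also have "\<dots> = (\<integral>\<omega>. (indicator T \<omega> * h \<omega>) * real_cond_exp M G F \<omega> \<partial>M)"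
      proof (rule S.real_cond_exp_intg(2)[symmetric])
        have TM[measurable]: "T \<in> sets M" using TG subalg by (auto simp: subalgebra_def)
        show "integrable M (\<lambda>\<omega>. indicator T \<omega> * h \<omega> * F \<omega>)"
        proof (rule bnd_int[of _ 1])
          fix \<omega> show "\<bar>indicator T \<omega> * h \<omega> * F \<omega>\<bar> \<le> (1::real)"
            using h_abs[of \<omega>] F_abs[of \<omega>] by (auto simp: abs_mult indicator_def intro: mult_le_one)
        qed measurable
      qed measurable
      also have "\<dots> = (\<integral>\<omega>\<in>T. h \<omega> * real_cond_exp M G F \<omega> \<partial>M)"
        unfolding setint by (simp add: mult.assoc)
      finally show "(\<integral>\<omega>\<in>T. F \<omega> * W \<omega> \<partial>M) = (\<integral>\<omega>\<in>T. h \<omega> * real_cond_exp M G F \<omega> \<partial>M)" .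
    qed (simp_all add: intFW inthF)
    define c0 where "c0 = (indicator B 0 :: real)"
    define c1 where "c1 = (indicator B 1 - indicator B 0 :: real)"
    have indB: "indicator B (R \<omega>) = c0 + c1 * W \<omega>" if "\<omega> \<in> space M" for \<omega>
    proof -
      have "R \<omega> \<in> {0,1}" using R_vals that by auto
      then show ?thesis unfolding c0_def c1_def W_def by auto
    qed
    have a: "AE \<omega> in M. real_cond_exp M G (\<lambda>\<omega>. F \<omega> * indicator B (R \<omega>)) \<omega> = real_cond_exp M G (\<lambda>\<omega>. c0 * F \<omega> + c1 * (F \<omega> * W \<omega>)) \<omega>"
      by (rule S.real_cond_exp_cong) (auto simp: indB algebra_simps)
    have b: "AE \<omega> in M. real_cond_exp M G (\<lambda>\<omega>. c0 * F \<omega> + c1 * (F \<omega> * W \<omega>)) \<omega> = real_cond_exp M G (\<lambda>\<omega>. c0 * F \<omega>) \<omega> + real_cond_exp M G (\<lambda>\<omega>. c1 * (F \<omega> * W \<omega>)) \<omega>"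
      by (rule S.real_cond_exp_add) (simp_all add: intF intFW)
    have c: "AE \<omega> in M. real_cond_exp M G (\<lambda>\<omega>. c0 * F \<omega>) \<omega> = c0 * real_cond_exp M G F \<omega>"
      by (rule S.real_cond_exp_cmult[OF intF])
    have d: "AE \<omega> in M. real_cond_exp M G (\<lambda>\<omega>. c1 * (F \<omega> * W \<omega>)) \<omega> = c1 * real_cond_exp M G (\<lambda>\<omega>. F \<omega> * W \<omega>) \<omega>"
      by (rule S.real_cond_exp_cmult[OF intFW])
    have e: "AE \<omega> in M. real_cond_exp M G (\<lambda>\<omega>. indicator B (R \<omega>)) \<omega> = real_cond_exp M G (\<lambda>\<omega>. c0 + c1 * W \<omega>) \<omega>"
      by (rule S.real_cond_exp_cong) (auto simp: indB)
    have f: "AE \<omega> in M. real_cond_exp M G (\<lambda>\<omega>. c0 + c1 * W \<omega>) \<omega> = real_cond_exp M G (\<lambda>\<omega>. c0) \<omega> + real_cond_exp M G (\<lambda>\<omega>. c1 * W \<omega>) \<omega>"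
      by (rule S.real_cond_exp_add) (simp_all add: intW)
    have g: "AE \<omega> in M. real_cond_exp M G (\<lambda>\<omega>. c0) \<omega> = c0"
      by (rule S.real_cond_exp_F_meas) simp_all
    have h': "AE \<omega> in M. real_cond_exp M G (\<lambda>\<omega>. c1 * W \<omega>) \<omega> = c1 * real_cond_exp M G W \<omega>"
      by (rule S.real_cond_exp_cmult[OF intW])
    have fin: "AE \<omega> in M. real_cond_exp M G (\<lambda>\<omega>. F \<omega> * indicator B (R \<omega>)) \<omega>
        = real_cond_exp M G F \<omega> * real_cond_exp M G (\<lambda>\<omega>. indicator B (R \<omega>)) \<omega>"
      using a b c d e f g h' cW cFW by eventually_elim (simp add: algebra_simps)
    then show "AE \<omega> in M. real_cond_exp M G (\<lambda>\<omega>. indicator A (\<phi> (X \<omega>)) * indicator B (R \<omega>)) \<omega>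
        = real_cond_exp M G (\<lambda>\<omega>. indicator A (\<phi> (X \<omega>))) \<omega> * real_cond_exp M G (\<lambda>\<omega>. indicator B (R \<omega>)) \<omega>"
      unfolding F_def .
  qed
  have m1: "cond_indep M V borel R (count_space UNIV) (\<lambda>\<omega>. (Y \<omega>, U \<omega>)) (count_space UNIV \<Otimes>\<^sub>M borel)"
    using main[OF orth_proj_meas[OF subspace_span[of "{\<beta> 0, \<beta> 1}"]]] unfolding V_def .
  have m2: "cond_indep M X borel R (count_space UNIV) (\<lambda>\<omega>. (Y \<omega>, U \<omega>)) (count_space UNIV \<Otimes>\<^sub>M borel)"
    using main[of "\<lambda>x. x"] by simp
  show ?thesis using m1 m2 by blast
qed

end
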